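(* Let $\mathcal Z,\mathcal S$ be finite, $f:\mathcal Z\times\mathcal S\to\mathbb R$, and $(Z_i,S_i)$, $i=1,\dots,n$, random variables with a common joint law $P_{ZS}$ (not depending on $i$) such that $\Pr[\mathbf S=\mathbf s\mid\mathbf Z=\mathbf z]=\prod_{i=1}^n\Pr[S_i=s_i\mid Z_i=z_i]$. Suppose there are reals $a<b$ such that for every $z$ with $P_Z(z)>0$ and every $s$ with $P_{S|Z}(s|z)>0$, $a\le f(z,s)-\mathbb E_{S\sim P_{S|Z}(\cdot|z)}[f(z,S)]\le b$. Then for every type $p$ with $\Pr[\hat p_{\mathbf Z}=p]>0$ and every $\xi>0$, $$\Pr\Big[\Big|\sum_{i=1}^n f(Z_i,S_i)-\mu\Big|\ge\xi\ \Big|\ \hat p_{\mathbf Z}=p\Big]\le 2e^{-\frac{\xi^2}{n(b-a)^2}},$$ where $\mu=\mathbb E\big[\sum_{i=1}^n f(Z_i,S_i)\mid\hat p_{\mathbf Z}=p\big]$.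
   Context: $\mathbf Z=(Z_1,\dots,Z_n)$, $\mathbf S=(S_1,\dots,S_n)$; $\hat p_{\mathbf Z}$ is the empirical distribution (type) of $\mathbf Z$; $P_{S|Z}$ is the conditional of $P_{ZS}$. *)

theory Defs
  imports "HOL-Probability.Probability"
begin

definition cond_prob :: "'a measure \<Rightarrow> 'a set \<Rightarrow> 'a set \<Rightarrow> real" where
  "cond_prob M A B = measure M (A \<inter> B) / measure M B"

definition cond_exp_event :: "'a measure \<Rightarrow> ('a \<Rightarrow> real) \<Rightarrow> 'a set \<Rightarrow> real" where
  "cond_exp_event M X B = (\<integral>\<omega>. indicator B \<omega> * X \<omega> \<partial>M) / measure M B"

definition emp_type :: "nat \<Rightarrow> (nat \<Rightarrow> 'z) \<Rightarrow> 'z \<Rightarrow> real" where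
  "emp_type n zv z = real (card {i\<in>{..<n}. zv i = z}) / real n"

end

theory Submission
  imports Defs
begin

lemma emp_type_restrict: "emp_type n (restrict zv {..<n}) = emp_type n zv"
  unfolding emp_type_def by (intro ext arg_cong2[where f="(/)"] refl arg_cong[where f=real] arg_cong[where f=card]) auto

theorem lemma17:
  fixes M :: "'a measure"
    and Z :: "nat \<Rightarrow> 'a \<Rightarrow> 'z::finite"
    and S :: "nat \<Rightarrow> 'a \<Rightarrow> 's::finite"
    and f :: "'z \<Rightarrow> 's \<Rightarrow> real"
    and PZS :: "'z \<Rightarrow> 's \<Rightarrow> real"
    and n :: nat and a b \<xi> :: real and p :: "'z \<Rightarrow> real"
  assumes M: "prob_space M"
    and Zmeas: "\<forall>i<n. Z i \<in> measurable M (count_space UNIV)"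
    and Smeas: "\<forall>i<n. S i \<in> measurable M (count_space UNIV)"
    and law: "\<forall>i<n. \<forall>z s. measure M {\<omega>\<in>space M. Z i \<omega> = z \<and> S i \<omega> = s} = PZS z s"
    and condind: "\<forall>zv sv. measure M {\<omega>\<in>space M. \<forall>i<n. Z i \<omega> = zv i} > 0 \<longrightarrow>
        cond_prob M {\<omega>\<in>space M. \<forall>i<n. S i \<omega> = sv i} {\<omega>\<in>space M. \<forall>i<n. Z i \<omega> = zv i}
        = (\<Prod>i<n. cond_prob M {\<omega>\<in>space M. S i \<omega> = sv i} {\<omega>\<in>space M. Z i \<omega> = zv i})"
    and ab: "a < b"
    and bnd: "\<forall>z s. (\<Sum>s'\<in>UNIV. PZS z s') > 0 \<and> PZS z s / (\<Sum>s'\<in>UNIV. PZS z s') > 0 \<longrightarrow>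
        a \<le> f z s - (\<Sum>s'\<in>UNIV. (PZS z s' / (\<Sum>t\<in>UNIV. PZS z t)) * f z s') \<and>
        f z s - (\<Sum>s'\<in>UNIV. (PZS z s' / (\<Sum>t\<in>UNIV. PZS z t)) * f z s') \<le> b"
    and ptype: "measure M {\<omega>\<in>space M. emp_type n (\<lambda>i. Z i \<omega>) = p} > 0"
    and xi: "\<xi> > 0"
  shows "let E = {\<omega>\<in>space M. emp_type n (\<lambda>i. Z i \<omega>) = p};
             T = (\<lambda>\<omega>. \<Sum>i<n. f (Z i \<omega>) (S i \<omega>));
             \<mu> = cond_exp_event M T E
         in cond_prob M {\<omega>\<in>space M. \<bar>T \<omega> - \<mu>\<bar> \<ge> \<xi>} E
            \<le> 2 * exp (- (\<xi>\<^sup>2) / (real n * (b - a)\<^sup>2))"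
  proof -
  interpret prob_space M by (rule M)
  define qz where "qz z = (\<Sum>s'\<in>UNIV. PZS z s')" for z
  define q where "q z s = PZS z s / qz z" for z s
  define g where "g z = (\<Sum>s'\<in>UNIV. (PZS z s' / (\<Sum>t\<in>UNIV. PZS z t)) * f z s')" for z
  define A where "A zv = {\<omega>\<in>space M. \<forall>i<n. Z i \<omega> = zv i}" for zv
  define B where "B sv = {\<omega>\<in>space M. \<forall>i<n. S i \<omega> = sv i}" for sv
  define W where "W zv sv = (\<Prod>i<n. q (zv i) (sv i))" for zv :: "nat \<Rightarrow> 'z" and sv :: "nat \<Rightarrow> 's"
  define Fz where "Fz = PiE {..<n} (\<lambda>_. UNIV :: 'z set)"
  define Fs where "Fs = PiE {..<n} (\<lambda>_. UNIV :: 's set)"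
  define Q where "Q zv = Pi_pmf {..<n} undefined (\<lambda>i. embed_pmf (q (zv i)))" for zv
  define c where "c = (\<Sum>z\<in>UNIV. real n * p z * g z)"
  have finFz: "finite Fz" unfolding Fz_def by (intro finite_PiE) auto
  have finFs: "finite Fs" unfolding Fs_def by (intro finite_PiE) auto
  have Zset: "{\<omega>\<in>space M. Z i \<omega> = z} \<in> sets M" if "i < n" for i z
  proof -
    have "Z i -` {z} \<inter> space M \<in> sets M"
      using Zmeas that by (intro measurable_sets[where A="count_space UNIV"]) auto
    moreover have "Z i -` {z} \<inter> space M = {\<omega>\<in>space M. Z i \<omega> = z}" by auto
    ultimately show ?thesis by simp
  qed
  have Sset: "{\<omega>\<in>space M. S i \<omega> = z} \<in> sets M" if "i < n" for i z
  proof -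
    have "S i -` {z} \<inter> space M \<in> sets M"
      using Smeas that by (intro measurable_sets[where A="count_space UNIV"]) auto
    moreover have "S i -` {z} \<inter> space M = {\<omega>\<in>space M. S i \<omega> = z}" by auto
    ultimately show ?thesis by simp
  qed
  have Aset: "A zv \<in> sets M" for zv
  proof (cases "n = 0")
    case True then show ?thesis by (simp add: A_def)
  next
    case False
    have "A zv = (\<Inter>i\<in>{..<n}. {\<omega>\<in>space M. Z i \<omega> = zv i})" using False by (auto simp: A_def)
    also have "\<dots> \<in> sets M" using False Zset by (intro sets.finite_INT) auto
    finally show ?thesis .
  qed
  have Bset: "B sv \<in> sets M" for sv
  proof (cases "n = 0")
    case True then show ?thesis by (simp add: B_def)
  next
    case False
    have "B sv = (\<Inter>i\<in>{..<n}. {\<omega>\<in>space M. S i \<omega> = sv i})" using False by (auto simp: B_def)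
    also have "\<dots> \<in> sets M" using False Sset by (intro sets.finite_INT) auto
    finally show ?thesis .
  qed
  have PZS_nn: "PZS z s \<ge> 0" if "i < n" for i z s
    using law that by (metis measure_nonneg)
  have PZi: "prob {\<omega>\<in>space M. Z i \<omega> = z} = qz z" if "i < n" for i z
  proof -
    have "{\<omega>\<in>space M. Z i \<omega> = z} = (\<Union>s\<in>UNIV. {\<omega>\<in>space M. Z i \<omega> = z \<and> S i \<omega> = s})" by auto
    also have "prob \<dots> = (\<Sum>s\<in>UNIV. prob {\<omega>\<in>space M. Z i \<omega> = z \<and> S i \<omega> = s})"
    proof (rule finite_measure_finite_Union)
      show "(\<lambda>s. {\<omega>\<in>space M. Z i \<omega> = z \<and> S i \<omega> = s}) ` UNIV \<subseteq> sets M"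
      proof safe
        fix s
        have "{\<omega>\<in>space M. Z i \<omega> = z \<and> S i \<omega> = s} = {\<omega>\<in>space M. Z i \<omega> = z} \<inter> {\<omega>\<in>space M. S i \<omega> = s}" by auto
        then show "{\<omega>\<in>space M. Z i \<omega> = z \<and> S i \<omega> = s} \<in> sets M" using Zset Sset that by auto
      qed
      show "disjoint_family_on (\<lambda>s. {\<omega>\<in>space M. Z i \<omega> = z \<and> S i \<omega> = s}) UNIV"
        by (auto simp: disjoint_family_on_def)
    qed simp
    also have "\<dots> = qz z" using law that by (simp add: qz_def)
    finally show ?thesis .
  qed
  have cp: "cond_prob M {\<omega>\<in>space M. S i \<omega> = s} {\<omega>\<in>space M. Z i \<omega> = z} = q z s" if "i < n" for i z s
  proof -
    have "{\<omega>\<in>space M. S i \<omega> = s} \<inter> {\<omega>\<in>space M. Z i \<omega> = z} = {\<omega>\<in>space M. Z i \<omega> = z \<and> S i \<omega> = s}" by auto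
    then show ?thesis using law that PZi[OF that] by (simp add: cond_prob_def q_def)
  qed
  have At: "prob (A zv \<inter> B sv) = prob (A zv) * W zv sv" for zv sv
  proof (cases "prob (A zv) > 0")
    case True
    have "cond_prob M (B sv) (A zv) = W zv sv"
      using condind True cp unfolding A_def B_def W_def by simp
    then show ?thesis using True by (simp add: cond_prob_def Int_commute field_simps)
  next
    case False
    then have "prob (A zv) = 0" using measure_nonneg[of M "A zv"] by linarith
    moreover have "prob (A zv \<inter> B sv) \<le> prob (A zv)" using Aset by (intro finite_measure_mono) auto
    ultimately show ?thesis using measure_nonneg[of M "A zv \<inter> B sv"] by simp
  qed
  define zr where "zr \<omega> = restrict (\<lambda>i. Z i \<omega>) {..<n}" for \<omega>
  define sr where "sr \<omega> = restrict (\<lambda>i. S i \<omega>) {..<n}" for \<omega>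
  have zrA: "\<omega> \<in> A zv \<longleftrightarrow> \<omega> \<in> space M \<and> zv = zr \<omega>" if "zv \<in> Fz" for zv \<omega>
    using that unfolding A_def zr_def Fz_def by (auto simp: PiE_def extensional_def fun_eq_iff)
  have srB: "\<omega> \<in> B sv \<longleftrightarrow> \<omega> \<in> space M \<and> sv = sr \<omega>" if "sv \<in> Fs" for sv \<omega>
    using that unfolding B_def sr_def Fs_def by (auto simp: PiE_def extensional_def fun_eq_iff)
  have zrF: "zr \<omega> \<in> Fz" for \<omega> unfolding zr_def Fz_def by auto
  have srF: "sr \<omega> \<in> Fs" for \<omega> unfolding sr_def Fs_def by auto
  have decomp: "(\<integral>\<omega>. H (zr \<omega>) (sr \<omega>) \<partial>M) = (\<Sum>zv\<in>Fz. prob (A zv) * (\<Sum>sv\<in>Fs. W zv sv * H zv sv))"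
    for H :: "(nat \<Rightarrow> 'z) \<Rightarrow> (nat \<Rightarrow> 's) \<Rightarrow> real"
  proof -
    have pt: "H (zr \<omega>) (sr \<omega>) = (\<Sum>zv\<in>Fz. \<Sum>sv\<in>Fs. indicator (A zv \<inter> B sv) \<omega> * H zv sv)"
      if "\<omega> \<in> space M" for \<omega>
    proof -
      have "(\<Sum>zv\<in>Fz. \<Sum>sv\<in>Fs. indicator (A zv \<inter> B sv) \<omega> * H zv sv)
          = (\<Sum>zv\<in>Fz. if zv = zr \<omega> then (\<Sum>sv\<in>Fs. if sv = sr \<omega> then H zv sv else 0) else 0)"
        using that by (intro sum.cong refl) (auto simp: zrA srB indicator_def intro!: sum.cong)
      also have "\<dots> = H (zr \<omega>) (sr \<omega>)" using zrF srF finFz finFs by simp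
      finally show ?thesis by simp
    qed
    have "(\<integral>\<omega>. H (zr \<omega>) (sr \<omega>) \<partial>M) = (\<integral>\<omega>. (\<Sum>zv\<in>Fz. \<Sum>sv\<in>Fs. indicator (A zv \<inter> B sv) \<omega> * H zv sv) \<partial>M)"
      apply (rule Bochner_Integration.integral_cong[OF refl])
      apply (rule pt)
      apply assumption
      done
    also have "\<dots> = (\<Sum>zv\<in>Fz. \<Sum>sv\<in>Fs. prob (A zv \<inter> B sv) * H zv sv)"
    proof -
      have ABsp: "A zv \<inter> B sv \<inter> space M = A zv \<inter> B sv" for zv sv
        using Aset[of zv] sets.sets_into_space by blast
      have int: "integrable M (\<lambda>\<omega>. indicator (A zv \<inter> B sv) \<omega> * H zv sv)" for zv sv
        using Aset Bset by (intro integrable_mult_left integrable_real_indicator) (auto simp: less_top[symmetric])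
      show ?thesis
      proof -
        have "(\<integral>\<omega>. (\<Sum>zv\<in>Fz. \<Sum>sv\<in>Fs. indicator (A zv \<inter> B sv) \<omega> * H zv sv) \<partial>M)
            = (\<Sum>zv\<in>Fz. (\<integral>\<omega>. (\<Sum>sv\<in>Fs. indicator (A zv \<inter> B sv) \<omega> * H zv sv) \<partial>M))"
          by (rule Bochner_Integration.integral_sum) (intro Bochner_Integration.integrable_sum int)
        also have "\<dots> = (\<Sum>zv\<in>Fz. \<Sum>sv\<in>Fs. (\<integral>\<omega>. indicator (A zv \<inter> B sv) \<omega> * H zv sv \<partial>M))"
          by (intro sum.cong refl Bochner_Integration.integral_sum int)
        also have "\<dots> = (\<Sum>zv\<in>Fz. \<Sum>sv\<in>Fs. prob (A zv \<inter> B sv) * H zv sv)"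
          by (intro sum.cong refl) (simp only: Bochner_Integration.integral_mult_left_zero Bochner_Integration.integral_indicator ABsp)
        finally show ?thesis .
      qed
    qed
    also have "\<dots> = (\<Sum>zv\<in>Fz. prob (A zv) * (\<Sum>sv\<in>Fs. W zv sv * H zv sv))"
      by (simp add: At sum_distrib_left mult.assoc)
    finally show ?thesis .
  qed
  have qpos: "qz (zv i) > 0" if "prob (A zv) > 0" "i < n" for zv i
  proof -
    have "prob (A zv) \<le> prob {\<omega>\<in>space M. Z i \<omega> = zv i}"
      using that Zset by (intro finite_measure_mono) (auto simp: A_def)
    then show ?thesis using that PZi by simp
  qed
  have qvalid: "pmf (embed_pmf (q z)) s = q z s" if "qz z > 0" "n > 0" for z s
  proof (rule pmf_embed_pmf)
    show nn: "0 \<le> q z x" for x using that PZS_nn[of 0] by (simp add: q_def)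
    have "(\<Sum>x\<in>UNIV. q z x) = 1"
      using that by (simp add: q_def sum_divide_distrib[symmetric] qz_def[symmetric])
    then show "(\<integral>\<^sup>+x. ennreal (q z x) \<partial>count_space UNIV) = 1"
      using nn by (simp add: nn_integral_count_space_finite)
  qed
  have setQ: "set_pmf (Q zv) \<subseteq> Fs" for zv
    using set_Pi_pmf_subset[of "{..<n}" undefined "\<lambda>i. embed_pmf (q (zv i))"]
    unfolding Q_def Fs_def by (auto simp: PiE_def extensional_def)
  have finQ: "finite (set_pmf (Q zv))" for zv using setQ finFs finite_subset by blast
  have pmfQ: "pmf (Q zv) sv = W zv sv" if "prob (A zv) > 0" "sv \<in> Fs" for zv sv
  proof -
    have "pmf (Q zv) sv = (\<Prod>i<n. pmf (embed_pmf (q (zv i))) (sv i))"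
      unfolding Q_def using that(2) by (intro pmf_Pi') (auto simp: Fs_def PiE_def extensional_def)
    also have "\<dots> = W zv sv" unfolding W_def
      using qpos[OF that(1)] qvalid by (intro prod.cong refl) auto
    finally show ?thesis .
  qed
  have DQ: "prob (A zv) * (\<Sum>sv\<in>Fs. W zv sv * H sv) = prob (A zv) * measure_pmf.expectation (Q zv) H"
    for zv and H :: "(nat \<Rightarrow> 's) \<Rightarrow> real"
  proof (cases "prob (A zv) > 0")
    case True
    have "measure_pmf.expectation (Q zv) H = (\<Sum>a\<in>Fs. pmf (Q zv) a *\<^sub>R H a)"
      by (rule integral_measure_pmf[OF finFs]) (use setQ in blast)
    also have "\<dots> = (\<Sum>sv\<in>Fs. W zv sv * H sv)" using pmfQ[OF True] by simp
    finally show ?thesis by simp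
  next
    case False
    then have "prob (A zv) = 0" using measure_nonneg[of M "A zv"] by linarith
    then show ?thesis by simp
  qed
  have compQ: "measure_pmf.expectation (Q zv) (\<lambda>sv. h (sv i)) = (\<Sum>s\<in>UNIV. q (zv i) s * h s)"
    if "prob (A zv) > 0" "i < n" for zv i and h :: "'s \<Rightarrow> real"
  proof -
    have "measure_pmf.expectation (Q zv) (\<lambda>sv. h (sv i))
        = measure_pmf.expectation (map_pmf (\<lambda>sv. sv i) (Q zv)) h" by simp
    also have "map_pmf (\<lambda>sv. sv i) (Q zv) = embed_pmf (q (zv i))"
      unfolding Q_def using that by (subst Pi_pmf_component) auto
    also have "measure_pmf.expectation (embed_pmf (q (zv i))) h = (\<Sum>a\<in>UNIV. pmf (embed_pmf (q (zv i))) a *\<^sub>R h a)"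
      by (rule integral_measure_pmf) auto
    also have "\<dots> = (\<Sum>s\<in>UNIV. q (zv i) s * h s)"
      using qvalid qpos[OF that] that by simp
    finally show ?thesis .
  qed
  have gq: "g z = (\<Sum>s\<in>UNIV. q z s * f z s)" for z unfolding g_def q_def qz_def by simp
  have mean: "measure_pmf.expectation (Q zv) (\<lambda>sv. \<Sum>i<n. f (zv i) (sv i)) = (\<Sum>i<n. g (zv i))"
    if "prob (A zv) > 0" for zv
  proof -
    have "measure_pmf.expectation (Q zv) (\<lambda>sv. \<Sum>i<n. f (zv i) (sv i))
        = (\<Sum>i<n. measure_pmf.expectation (Q zv) (\<lambda>sv. f (zv i) (sv i)))"
      by (rule Bochner_Integration.integral_sum) (rule integrable_measure_pmf_finite[OF finQ])
    also have "\<dots> = (\<Sum>i<n. g (zv i))"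
      using compQ[OF that] gq by (intro sum.cong refl) auto
    finally show ?thesis .
  qed
  have typec: "(\<Sum>i<n. g (zv i)) = c" if "emp_type n zv = p" for zv
  proof -
    have "(\<Sum>i<n. g (zv i)) = (\<Sum>i<n. \<Sum>z\<in>UNIV. if zv i = z then g z else 0)" by simp
    also have "\<dots> = (\<Sum>z\<in>UNIV. \<Sum>i<n. if zv i = z then g z else 0)" by (rule sum.swap)
    also have "\<dots> = (\<Sum>z\<in>UNIV. real (card {i\<in>{..<n}. zv i = z}) * g z)"
      by (intro sum.cong refl) (auto simp: sum.If_cases intro!: arg_cong[where f=card])
    also have "\<dots> = c" unfolding c_def
    proof (intro sum.cong refl)
      fix z
      have "p z = real (card {i\<in>{..<n}. zv i = z}) / real n"
        using that by (auto simp: emp_type_def)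
      moreover have "n = 0 \<Longrightarrow> card {i\<in>{..<n}. zv i = z} = 0" by simp
      ultimately show "real (card {i\<in>{..<n}. zv i = z}) * g z = real n * p z * g z"
        by (cases "n = 0") auto
    qed
    finally show ?thesis .
  qed
  have hoeff: "measure_pmf.prob (Q zv) {sv. \<xi> \<le> \<bar>(\<Sum>i<n. f (zv i) (sv i)) - (\<Sum>i<n. g (zv i))\<bar>}
      \<le> 2 * exp (- (\<xi>\<^sup>2) / (real n * (b - a)\<^sup>2))"
    if pos: "prob (A zv) > 0" and n0: "n > 0" for zv
  proof -
    have indep: "prob_space.indep_vars (measure_pmf (Q zv)) (\<lambda>_. borel) (\<lambda>i sv. f (zv i) (sv i)) {..<n}"
      unfolding Q_def
      by (rule prob_space.indep_vars_compose2[OF measure_pmf.prob_space_axioms indep_vars_Pi_pmf]) auto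
    interpret H: Hoeffding_ineq "measure_pmf (Q zv)" "{..<n}" "\<lambda>i sv. f (zv i) (sv i)"
      "\<lambda>i. g (zv i) + a" "\<lambda>i. g (zv i) + b" "\<Sum>i<n. g (zv i)"
    proof unfold_locales
      show "finite {..<n}" by simp
      show "prob_space.indep_vars (measure_pmf (Q zv)) (\<lambda>_. borel) (\<lambda>i sv. f (zv i) (sv i)) {..<n}"
        by (rule indep)
      show "AE x in measure_pmf (Q zv). f (zv i) (x i) \<in> {g (zv i) + a..g (zv i) + b}" if "i \<in> {..<n}" for i
      proof (rule AE_pmfI)
        fix sv assume "sv \<in> set_pmf (Q zv)"
        then have "sv i \<in> set_pmf (embed_pmf (q (zv i)))"
          using that unfolding Q_def by (auto simp: set_Pi_pmf PiE_dflt_def)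
        then have "q (zv i) (sv i) > 0"
          using qvalid qpos[OF pos] that n0 by (auto simp: set_pmf_iff order.strict_iff_order PZS_nn q_def qz_def)
        then have "a \<le> f (zv i) (sv i) - g (zv i) \<and> f (zv i) (sv i) - g (zv i) \<le> b"
          using bnd qpos[OF pos] that unfolding g_def q_def qz_def by auto
        then show "f (zv i) (sv i) \<in> {g (zv i) + a..g (zv i) + b}" by auto
      qed
      show "(\<Sum>i<n. g (zv i)) \<equiv> (\<Sum>i\<in>{..<n}. measure_pmf.expectation (Q zv) (\<lambda>sv. f (zv i) (sv i)))"
        using compQ[OF pos] gq by (intro eq_reflection sum.cong refl) auto
    qed
    have sq: "(\<Sum>i\<in>{..<n}. (g (zv i) + b - (g (zv i) + a))\<^sup>2) = real n * (b - a)\<^sup>2" by simp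
    have "measure_pmf.prob (Q zv) {sv \<in> space (measure_pmf (Q zv)). \<xi> \<le> \<bar>(\<Sum>i\<in>{..<n}. f (zv i) (sv i)) - (\<Sum>i<n. g (zv i))\<bar>}
        \<le> 2 * exp (-2 * \<xi>\<^sup>2 / (\<Sum>i\<in>{..<n}. (g (zv i) + b - (g (zv i) + a))\<^sup>2))"
      by (rule H.Hoeffding_ineq_abs_ge) (use xi n0 ab in \<open>auto simp: sq\<close>)
    also have "\<dots> \<le> 2 * exp (- (\<xi>\<^sup>2) / (real n * (b - a)\<^sup>2))"
    proof -
      have d: "real n * (b - a)\<^sup>2 > 0" using n0 ab by simp
      have "-2 * \<xi>\<^sup>2 / (real n * (b - a)\<^sup>2) \<le> - (\<xi>\<^sup>2) / (real n * (b - a)\<^sup>2)"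
        by (rule divide_right_mono) (use d in auto)
      then show ?thesis unfolding sq by simp
    qed
    finally show ?thesis by simp
  qed
  define E where "E = {\<omega>\<in>space M. emp_type n (\<lambda>i. Z i \<omega>) = p}"
  define T where "T = (\<lambda>\<omega>. \<Sum>i<n. f (Z i \<omega>) (S i \<omega>))"
  have Esp: "E \<subseteq> space M" unfolding E_def by auto
  have indE: "indicator E \<omega> = (if emp_type n (zr \<omega>) = p then 1 else 0 :: real)" if "\<omega> \<in> space M" for \<omega>
    using that emp_type_restrict[of n "\<lambda>i. Z i \<omega>"] by (simp add: E_def zr_def indicator_def)
  have Tr: "T \<omega> = (\<Sum>i<n. f (zr \<omega> i) (sr \<omega> i))" for \<omega>
    by (simp add: T_def zr_def sr_def)
  have PE: "prob E = (\<Sum>zv\<in>Fz. prob (A zv) * (if emp_type n zv = p then 1 else 0))"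
  proof -
    have "prob E = (\<integral>\<omega>. indicator E \<omega> \<partial>M)" using Esp by (simp add: Int_absorb2)
    also have "\<dots> = (\<integral>\<omega>. (\<lambda>zv sv. if emp_type n zv = p then 1 else 0) (zr \<omega>) (sr \<omega>) \<partial>M)"
      by (rule Bochner_Integration.integral_cong[OF refl]) (simp add: indE)
    also have "\<dots> = (\<Sum>zv\<in>Fz. prob (A zv) * (\<Sum>sv\<in>Fs. W zv sv * (\<lambda>zv sv. if emp_type n zv = p then 1 else 0) zv sv))"
      by (rule decomp)
    also have "\<dots> = (\<Sum>zv\<in>Fz. prob (A zv) * (if emp_type n zv = p then 1 else 0))"
      by (intro sum.cong refl, subst DQ, simp)
    finally show ?thesis .
  qed
  have TE: "(\<integral>\<omega>. indicator E \<omega> * T \<omega> \<partial>M) = c * prob E"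
  proof -
    have "(\<integral>\<omega>. indicator E \<omega> * T \<omega> \<partial>M)
        = (\<integral>\<omega>. (\<lambda>zv sv. if emp_type n zv = p then (\<Sum>i<n. f (zv i) (sv i)) else 0) (zr \<omega>) (sr \<omega>) \<partial>M)"
      by (rule Bochner_Integration.integral_cong[OF refl]) (simp add: indE Tr)
    also have "\<dots> = (\<Sum>zv\<in>Fz. prob (A zv) * (\<Sum>sv\<in>Fs. W zv sv * (\<lambda>zv sv. if emp_type n zv = p then (\<Sum>i<n. f (zv i) (sv i)) else 0) zv sv))"
      by (rule decomp)
    also have "\<dots> = (\<Sum>zv\<in>Fz. prob (A zv) * (if emp_type n zv = p then c else 0))"
    proof (intro sum.cong refl)
      fix zv
      show "prob (A zv) * (\<Sum>sv\<in>Fs. W zv sv * (\<lambda>zv sv. if emp_type n zv = p then (\<Sum>i<n. f (zv i) (sv i)) else 0) zv sv)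
          = prob (A zv) * (if emp_type n zv = p then c else 0)"
      proof (cases "prob (A zv) > 0")
        case True
        then show ?thesis by (subst DQ) (simp add: mean typec)
      next
        case False
        then have "prob (A zv) = 0" using measure_nonneg[of M "A zv"] by linarith
        then show ?thesis by simp
      qed
    qed
    also have "\<dots> = c * prob E" unfolding PE by (simp add: sum_distrib_left) (intro sum.cong refl, simp)
    finally show ?thesis .
  qed
  have PEpos: "prob E > 0" using ptype unfolding E_def by simp
  have mu: "cond_exp_event M T E = c"
    unfolding cond_exp_event_def TE using PEpos by simp
  have bad: "prob ({\<omega>\<in>space M. \<xi> \<le> \<bar>T \<omega> - c\<bar>} \<inter> E) \<le> 2 * exp (- (\<xi>\<^sup>2) / (real n * (b - a)\<^sup>2)) * prob E"
  proof -
    define H3 where "H3 zv sv = (if emp_type n zv = p \<and> \<xi> \<le> \<bar>(\<Sum>i<n. f (zv i) (sv i)) - c\<bar> then 1 else 0 :: real)"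
      for zv :: "nat \<Rightarrow> 'z" and sv :: "nat \<Rightarrow> 's"
    have "prob ({\<omega>\<in>space M. \<xi> \<le> \<bar>T \<omega> - c\<bar>} \<inter> E) = (\<integral>\<omega>. indicator ({\<omega>\<in>space M. \<xi> \<le> \<bar>T \<omega> - c\<bar>} \<inter> E) \<omega> \<partial>M)"
      using Esp by (simp add: Int_absorb2 Int_assoc)
    also have "\<dots> = (\<integral>\<omega>. H3 (zr \<omega>) (sr \<omega>) \<partial>M)"
    proof (rule Bochner_Integration.integral_cong[OF refl])
      fix \<omega> assume "\<omega> \<in> space M"
      then show "indicator ({\<omega>\<in>space M. \<xi> \<le> \<bar>T \<omega> - c\<bar>} \<inter> E) \<omega> = H3 (zr \<omega>) (sr \<omega>)"
        using indE[of \<omega>] Tr[of \<omega>] by (auto simp: H3_def indicator_def)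
    qed
    also have "\<dots> = (\<Sum>zv\<in>Fz. prob (A zv) * (\<Sum>sv\<in>Fs. W zv sv * H3 zv sv))"
      by (rule decomp)
    also have "\<dots> \<le> (\<Sum>zv\<in>Fz. prob (A zv) * (if emp_type n zv = p then 2 * exp (- (\<xi>\<^sup>2) / (real n * (b - a)\<^sup>2)) else 0))"
    proof (intro sum_mono)
      fix zv
      show "prob (A zv) * (\<Sum>sv\<in>Fs. W zv sv * H3 zv sv)
          \<le> prob (A zv) * (if emp_type n zv = p then 2 * exp (- (\<xi>\<^sup>2) / (real n * (b - a)\<^sup>2)) else 0)"
      proof (cases "prob (A zv) > 0")
        case pos: True
        have "measure_pmf.expectation (Q zv) (H3 zv)
            \<le> (if emp_type n zv = p then 2 * exp (- (\<xi>\<^sup>2) / (real n * (b - a)\<^sup>2)) else 0)"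
        proof (cases "emp_type n zv = p \<and> n > 0")
          case True
          have "H3 zv = indicator {sv. \<xi> \<le> \<bar>(\<Sum>i<n. f (zv i) (sv i)) - (\<Sum>i<n. g (zv i))\<bar>}"
            using True typec by (auto simp: H3_def indicator_def fun_eq_iff)
          then have "measure_pmf.expectation (Q zv) (H3 zv)
              = measure_pmf.prob (Q zv) {sv. \<xi> \<le> \<bar>(\<Sum>i<n. f (zv i) (sv i)) - (\<Sum>i<n. g (zv i))\<bar>}"
            by simp
          then show ?thesis using hoeff[OF pos] True by simp
        next
          case False
          then have "H3 zv = (\<lambda>_. 0)"
            using xi by (auto simp: H3_def fun_eq_iff c_def)
          then show ?thesis by simp
        qed
        then show ?thesis by (subst DQ) (intro mult_left_mono, auto)
      next
        case False
        then have "prob (A zv) = 0" using measure_nonneg[of M "A zv"] by linarith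
        then show ?thesis by simp
      qed
    qed
    also have "\<dots> = 2 * exp (- (\<xi>\<^sup>2) / (real n * (b - a)\<^sup>2)) * prob E"
      unfolding PE sum_distrib_left by (intro sum.cong refl) simp
    finally show ?thesis .
  qed
  have "cond_prob M {\<omega>\<in>space M. \<xi> \<le> \<bar>T \<omega> - c\<bar>} E \<le> 2 * exp (- (\<xi>\<^sup>2) / (real n * (b - a)\<^sup>2))"
    unfolding cond_prob_def using bad PEpos by (simp add: divide_le_eq)
  then show ?thesis unfolding Let_def E_def[symmetric] T_def[symmetric] mu by simp
qed

end
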